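(* Let $G=(V,E,\boldsymbol{X})$ be a connected graph with at least two nodes, node features $\boldsymbol{x}_v\in\mathbb{R}^d$, a finite label set $\mathcal{Y}=\{1,\dots,|\mathcal{Y}|\}$, a nonempty set $V_{\text{train}}\subset V$ of labeled nodes with one-hot labels $\boldsymbol{y}_v$, and $V_{\text{test}}=V\setminus V_{\text{train}}$. Consider the TFGNN with $L$ layers $$\boldsymbol{h}^{(0)}_v=[\boldsymbol{x}_v;\tilde{\boldsymbol{y}}_v],$$ $$\boldsymbol{h}^{(l)}_v=\begin{cases}\mathrm{ReLU}\big(\boldsymbol{S}^{(l)}\boldsymbol{h}^{(l-1)}_v+\frac{1}{|\mathcal{N}(v)|}\sum_{u\in\mathcal{N}(v)}\boldsymbol{V}^{(l)}\boldsymbol{h}^{(l-1)}_u\big) & (v\in V_{\text{train}}),\\ \mathrm{ReLU}\big(\boldsymbol{T}^{(l)}\boldsymbol{h}^{(l-1)}_v+\frac{1}{|\mathcal{N}(v)|}\sum_{u\in\mathcal{N}(v)}\boldsymbol{W}^{(l)}\boldsymbol{h}^{(l-1)}_u\big) & (v\in V_{\text{test}}),\end{cases}\quad l\in[L],$$ $$\hat{\boldsymbol{y}}_v=\mathrm{softmax}(\boldsymbol{U}\boldsymbol{h}^{(L)}_v),$$ where, with $m=1+|\mathcal{Y}|$, the parameters satisfy for all $l\in[L]$: $\boldsymbol{S}^{(l)}_{-m:,:-m}=0$, $\boldsymbol{S}^{(l)}_{-m:,-m:}=\boldsymbol{I}_m$, $\boldsymbol{V}^{(l)}_{-m:}=0$,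 $\boldsymbol{T}^{(l)}_{-m:}=0$, $\boldsymbol{W}^{(l)}_{-m:,:-m}=0$, $\boldsymbol{W}^{(l)}_{-m:,-m:}=\boldsymbol{I}_m$, and $\boldsymbol{U}_{:,:-|\mathcal{Y}|}=0$, $\boldsymbol{U}_{:,-|\mathcal{Y}|:}=\boldsymbol{I}_{|\mathcal{Y}|}$, all other entries being arbitrary. Then for every $v\in V$ and $i\in\mathcal{Y}$, $$\boldsymbol{h}^{(L)}_{v,-(|\mathcal{Y}|-i+1)}=p_{L,v,i},\qquad \operatorname{argmax}_i\hat{\boldsymbol{y}}_{vi}=\operatorname{argmax}_i p_{L,v,i},$$ and, for $v\in V_{\text{test}}$, $p_{L,v,i}\to\hat{\boldsymbol{y}}^{\text{LP}}_{v,i}$ as $L\to\infty$.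
   Context: Numpy-like indexing: for a matrix $\boldsymbol{M}$, $\boldsymbol{M}_{-m:,:}$ (written $\boldsymbol{M}_{-m:}$) is its last $m$ rows, $\boldsymbol{M}_{:,-m:}$ its last $m$ columns, $\boldsymbol{M}_{:,:-m}$ all columns except the last $m$, and $\boldsymbol{h}_{-j}$ is the $j$-th entry from the end of a vector $\boldsymbol{h}$. $\mathcal{N}(v)$ is the set of neighbors of $v$. The label feature is $\tilde{\boldsymbol{y}}_v=[1;\boldsymbol{y}_v]$ for $v\in V_{\text{train}}$ and $\tilde{\boldsymbol{y}}_v=\mathbf{0}_{1+|\mathcal{Y}|}$ for $v\in V_{\text{test}}$, so $\boldsymbol{h}^{(0)}_v\in\mathbb{R}^{d+1+|\mathcal{Y}|}$; each $\boldsymbol{h}^{(l)}_v\in\mathbb{R}^{D_l}$ with $D_0=d+1+|\mathcal{Y}|$ and $D_l\ge 1+|\mathcal{Y}|$, the matrices $\boldsymbol{S}^{(l)},\boldsymbol{T}^{(l)},\boldsymbol{V}^{(l)},\boldsymbol{W}^{(l)}\in\mathbb{R}^{D_l\times D_{l-1}}$ and $\boldsymbol{U}\in\mathbb{R}^{|\mathcal{Y}|\times D_L}$. The one-hot vector $\boldsymbol{y}_v$ has its $i$-th coordinate equal to $1$ iff $v$ has label $i$. Define $p_{l,v,i}$ as the probability that a simple random walk started at $v$ (each step moves to a uniformly random neighbor) hits $V_{\text{train}}$ within $l$ steps and the first node of $V_{\text{train}}$ it hits has label $i$ (so $p_{l,v,i}=1[i=\text{label of } v]$ for $v\in V_{\text{train}}$).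 Label propagation output: $\hat{\boldsymbol{y}}^{\text{LP}}_{v,i}$ is the probability that the first node of $V_{\text{train}}$ hit by a simple random walk from $v$ has label $i$. *)

theory Defs
  imports Complex_Main
begin

definition nbrs :: "('a \<Rightarrow> 'a \<Rightarrow> bool) \<Rightarrow> 'a set \<Rightarrow> 'a \<Rightarrow> 'a set" where
  "nbrs E VV v = {u \<in> VV. E v u}"

definition simple_graph :: "('a \<Rightarrow> 'a \<Rightarrow> bool) \<Rightarrow> 'a set \<Rightarrow> bool" where
  "simple_graph E VV \<longleftrightarrow> finite VV \<and> (\<forall>u v. E u v \<longrightarrow> u \<in> VV \<and> v \<in> VV)
     \<and> (\<forall>u v. E u v \<longrightarrow> E v u) \<and> (\<forall>v. \<not> E v v)"

definition connected_graph :: "('a \<Rightarrow> 'a \<Rightarrow> bool) \<Rightarrow> 'a set \<Rightarrow> bool" where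
  "connected_graph E VV \<longleftrightarrow> (\<forall>u\<in>VV. \<forall>v\<in>VV. E\<^sup>*\<^sup>* u v)"

text \<open>Walks of exactly k steps from v (as vertex lists of length k+1) whose
  first k vertices are outside the training set and whose last vertex lies in it,
  i.e. the walks that first hit the training set at step k.\<close>

definition first_hit_walks ::
  "('a \<Rightarrow> 'a \<Rightarrow> bool) \<Rightarrow> 'a set \<Rightarrow> 'a set \<Rightarrow> nat \<Rightarrow> 'a \<Rightarrow> 'a list set" where
  "first_hit_walks E VV Tr k v = {ws. length ws = Suc k \<and> set ws \<subseteq> VV \<and> ws ! 0 = v
      \<and> (\<forall>j<k. E (ws ! j) (ws ! Suc j)) \<and> (\<forall>j<k. ws ! j \<notin> Tr) \<and> ws ! k \<in> Tr}"

text \<open>Probability of a walk prefix under the simple random walk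
  (each step to a uniformly random neighbor).\<close>

definition walk_prob :: "('a \<Rightarrow> 'a \<Rightarrow> bool) \<Rightarrow> 'a set \<Rightarrow> 'a list \<Rightarrow> real" where
  "walk_prob E VV ws = (\<Prod>j<length ws - 1. 1 / real (card (nbrs E VV (ws ! j))))"

definition hit_prob_exact ::
  "('a \<Rightarrow> 'a \<Rightarrow> bool) \<Rightarrow> 'a set \<Rightarrow> 'a set \<Rightarrow> ('a \<Rightarrow> nat) \<Rightarrow> nat \<Rightarrow> 'a \<Rightarrow> nat \<Rightarrow> real" where
  "hit_prob_exact E VV Tr lab k v i =
     (\<Sum>ws\<in>{ws \<in> first_hit_walks E VV Tr k v. lab (ws ! k) = i}. walk_prob E VV ws)"

text \<open>p_{l,v,i}: probability of hitting the training set within l steps with first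
  hit node of label i.\<close>

definition p_hit :: "('a \<Rightarrow> 'a \<Rightarrow> bool) \<Rightarrow> 'a set \<Rightarrow> 'a set \<Rightarrow> ('a \<Rightarrow> nat) \<Rightarrow> nat \<Rightarrow> 'a \<Rightarrow> nat \<Rightarrow> real" where
  "p_hit E VV Tr lab l v i = (\<Sum>k\<le>l. hit_prob_exact E VV Tr lab k v i)"

text \<open>Label propagation output: probability that the first training node hit by the
  random walk from v has label i (countable additivity over the hitting time).\<close>

definition y_LP :: "('a \<Rightarrow> 'a \<Rightarrow> bool) \<Rightarrow> 'a set \<Rightarrow> 'a set \<Rightarrow> ('a \<Rightarrow> nat) \<Rightarrow> 'a \<Rightarrow> nat \<Rightarrow> real" where
  "y_LP E VV Tr lab v i = (\<Sum>k. hit_prob_exact E VV Tr lab k v i)"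

text \<open>Vectors are functions nat \<Rightarrow> real (0-based coordinates, meaningful below the
  dimension); matrices are functions row \<Rightarrow> col \<Rightarrow> real; a layer-indexed matrix family
  is nat \<Rightarrow> nat \<Rightarrow> nat \<Rightarrow> real (layer, row, column). Labels are 1..K.\<close>

definition relu :: "real \<Rightarrow> real" where
  "relu x = max 0 x"

text \<open>Input h^(0)_v = [x_v; y~_v] with y~_v = [1; y_v] on training nodes and 0 otherwise.
  Coordinates 0..d-1: features; coordinate d: the indicator 1; coordinate d+i: label i.\<close>

definition tf_input :: "'a set \<Rightarrow> ('a \<Rightarrow> nat) \<Rightarrow> nat \<Rightarrow> ('a \<Rightarrow> nat \<Rightarrow> real) \<Rightarrow> 'a \<Rightarrow> nat \<Rightarrow> real" where
  "tf_input Tr lab d x v j =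
     (if j < d then x v j
      else if v \<in> Tr then (if j = d then 1 else if lab v = j - d then 1 else 0)
      else 0)"

fun tfgnn_h ::
  "('a \<Rightarrow> 'a \<Rightarrow> bool) \<Rightarrow> 'a set \<Rightarrow> 'a set \<Rightarrow> ('a \<Rightarrow> nat) \<Rightarrow> nat \<Rightarrow> ('a \<Rightarrow> nat \<Rightarrow> real) \<Rightarrow> (nat \<Rightarrow> nat)
   \<Rightarrow> (nat \<Rightarrow> nat \<Rightarrow> nat \<Rightarrow> real) \<Rightarrow> (nat \<Rightarrow> nat \<Rightarrow> nat \<Rightarrow> real)
   \<Rightarrow> (nat \<Rightarrow> nat \<Rightarrow> nat \<Rightarrow> real) \<Rightarrow> (nat \<Rightarrow> nat \<Rightarrow> nat \<Rightarrow> real)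
   \<Rightarrow> nat \<Rightarrow> 'a \<Rightarrow> nat \<Rightarrow> real" where
  "tfgnn_h E VV Tr lab d x D S T Vm W 0 v = tf_input Tr lab d x v"
| "tfgnn_h E VV Tr lab d x D S T Vm W (Suc l) v = (\<lambda>j.
     (if v \<in> Tr then
        relu ((\<Sum>c<D l. S (Suc l) j c * tfgnn_h E VV Tr lab d x D S T Vm W l v c)
          + (1 / real (card (nbrs E VV v))) *
            (\<Sum>u\<in>nbrs E VV v. \<Sum>c<D l. Vm (Suc l) j c * tfgnn_h E VV Tr lab d x D S T Vm W l u c))
      else
        relu ((\<Sum>c<D l. T (Suc l) j c * tfgnn_h E VV Tr lab d x D S T Vm W l v c)
          + (1 / real (card (nbrs E VV v))) *
            (\<Sum>u\<in>nbrs E VV v. \<Sum>c<D l. W (Suc l) j c * tfgnn_h E VV Tr lab d x D S T Vm W l u c))))"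

definition softmax :: "nat \<Rightarrow> (nat \<Rightarrow> real) \<Rightarrow> nat \<Rightarrow> real" where
  "softmax K z i = exp (z i) / (\<Sum>j\<in>{1..K}. exp (z j))"

text \<open>Set of maximizers (argmax, as a set to account for ties) over labels 1..K.\<close>

definition argmax_set :: "nat \<Rightarrow> (nat \<Rightarrow> real) \<Rightarrow> nat set" where
  "argmax_set K f = {i \<in> {1..K}. \<forall>j\<in>{1..K}. f j \<le> f i}"

text \<open>Block conditions on a D_l x D_(l-1) matrix M with m = 1+K:
  last m rows are zero on the first D_(l-1)-m columns / identity on the last m columns / zero.\<close>

definition last_rows_zero_left :: "nat \<Rightarrow> nat \<Rightarrow> nat \<Rightarrow> (nat \<Rightarrow> nat \<Rightarrow> real) \<Rightarrow> bool" where
  "last_rows_zero_left m R C M \<longleftrightarrow> (\<forall>r c. R - m \<le> r \<and> r < R \<and> c < C - m \<longrightarrow> M r c = 0)"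

definition last_rows_identity_right :: "nat \<Rightarrow> nat \<Rightarrow> nat \<Rightarrow> (nat \<Rightarrow> nat \<Rightarrow> real) \<Rightarrow> bool" where
  "last_rows_identity_right m R C M \<longleftrightarrow> (\<forall>r c. R - m \<le> r \<and> r < R \<and> C - m \<le> c \<and> c < C \<longrightarrow>
      M r c = (if r - (R - m) = c - (C - m) then 1 else 0))"

definition last_rows_zero :: "nat \<Rightarrow> nat \<Rightarrow> nat \<Rightarrow> (nat \<Rightarrow> nat \<Rightarrow> real) \<Rightarrow> bool" where
  "last_rows_zero m R C M \<longleftrightarrow> (\<forall>r c. R - m \<le> r \<and> r < R \<and> c < C \<longrightarrow> M r c = 0)"

end

theory Submission imports Defs begin

definition FF where "FF E VV Tr lab i k u = {ws \<in> first_hit_walks E VV Tr k u. lab (ws ! k) = i}"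

lemma FF_finite: "finite VV \<Longrightarrow> finite (FF E VV Tr lab i k u)"
proof -
  assume f: "finite VV"
  have "FF E VV Tr lab i k u \<subseteq> {ws. set ws \<subseteq> VV \<and> length ws = Suc k}"
    by (auto simp: FF_def first_hit_walks_def)
  moreover have "finite {ws. set ws \<subseteq> VV \<and> length ws = Suc k}"
    using finite_lists_length_eq[OF f] by simp
  ultimately show ?thesis by (rule finite_subset)
qed

lemma FF_Suc:
  assumes Ein: "\<forall>u v. E u v \<longrightarrow> u \<in> VV" and v: "v \<notin> Tr"
  shows "FF E VV Tr lab i (Suc k) v = (\<lambda>ws. v # ws) ` (\<Union>u\<in>nbrs E VV v. FF E VV Tr lab i k u)"
proof (intro equalityI subsetI)
  fix ws assume ws: "ws \<in> FF E VV Tr lab i (Suc k) v"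
  then obtain w ws' where eq: "ws = w # ws'" by (cases ws) (auto simp: FF_def first_hit_walks_def)
  have w: "w = v" using ws eq by (auto simp: FF_def first_hit_walks_def)
  have len: "length ws' = Suc k" using ws eq by (auto simp: FF_def first_hit_walks_def)
  have E0: "E v (ws' ! 0)" using ws eq w by (auto simp: FF_def first_hit_walks_def)
  have "ws' ! 0 \<in> set ws'" using len by simp
  hence u: "ws' ! 0 \<in> nbrs E VV v" using ws eq E0 by (auto simp: FF_def first_hit_walks_def nbrs_def)
  have "ws' \<in> FF E VV Tr lab i k (ws' ! 0)"
    unfolding FF_def first_hit_walks_def
  proof (intro CollectI conjI allI impI)
    show "length ws' = Suc k" by fact
    show "set ws' \<subseteq> VV" using ws eq by (auto simp: FF_def first_hit_walks_def)
    fix j assume "j < k"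
    then show "E (ws' ! j) (ws' ! Suc j)" using ws eq
      by (auto simp: FF_def first_hit_walks_def)
  next
    fix j assume "j < k"
    then show "ws' ! j \<notin> Tr" using ws eq
      by (auto simp: FF_def first_hit_walks_def)
  next
    show "ws' ! k \<in> Tr" "lab (ws' ! k) = i" using ws eq by (auto simp: FF_def first_hit_walks_def)
  qed simp
  then show "ws \<in> (\<lambda>ws. v # ws) ` (\<Union>u\<in>nbrs E VV v. FF E VV Tr lab i k u)"
    using u eq w by blast
next
  fix ws assume "ws \<in> (\<lambda>ws. v # ws) ` (\<Union>u\<in>nbrs E VV v. FF E VV Tr lab i k u)"
  then obtain u ws' where u: "u \<in> nbrs E VV v" and ws': "ws' \<in> FF E VV Tr lab i k u" and eq: "ws = v # ws'"
    by blast
  have vV: "v \<in> VV" using u Ein by (auto simp: nbrs_def)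
  have h: "length ws' = Suc k" "set ws' \<subseteq> VV" "ws' ! 0 = u" "\<forall>j<k. E (ws' ! j) (ws' ! Suc j)"
     "\<forall>j<k. ws' ! j \<notin> Tr" "ws' ! k \<in> Tr" "lab (ws' ! k) = i"
    using ws' by (auto simp: FF_def first_hit_walks_def)
  have Evu: "E v u" using u by (auto simp: nbrs_def)
  show "ws \<in> FF E VV Tr lab i (Suc k) v"
    unfolding FF_def first_hit_walks_def eq
  proof (intro CollectI conjI allI impI)
    fix j assume "j < Suc k"
    then show "E ((v # ws') ! j) ((v # ws') ! Suc j)" using h Evu by (cases j) auto
  next
    fix j assume "j < Suc k"
    then show "(v # ws') ! j \<notin> Tr" using h v by (cases j) auto
  qed (use h vV in auto)
qed

lemma walk_prob_Cons: "ws \<noteq> [] \<Longrightarrow> walk_prob E VV (v # ws) = 1 / real (card (nbrs E VV v)) * walk_prob E VV ws"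
proof -
  assume "ws \<noteq> []"
  then obtain n where n: "length ws = Suc n" by (cases ws) auto
  show ?thesis unfolding walk_prob_def using n
    by (simp add: prod.lessThan_Suc_shift del: prod.lessThan_Suc)
qed


lemma hpe_FF: "hit_prob_exact E VV Tr lab k v i = (\<Sum>ws\<in>FF E VV Tr lab i k v. walk_prob E VV ws)"
  by (simp add: hit_prob_exact_def FF_def)

lemma hpe_0:
  assumes "Tr \<subseteq> VV"
  shows "hit_prob_exact E VV Tr lab 0 v i = (if v \<in> Tr \<and> lab v = i then 1 else 0)"
proof -
  have "FF E VV Tr lab i 0 v = (if v \<in> Tr \<and> lab v = i then {[v]} else {})"
    using assms by (auto simp: FF_def first_hit_walks_def length_Suc_conv)
  then show ?thesis by (simp add: hpe_FF walk_prob_def)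
qed

lemma hpe_Suc_Tr:
  assumes "v \<in> Tr"
  shows "hit_prob_exact E VV Tr lab (Suc k) v i = 0"
proof -
  have "FF E VV Tr lab i (Suc k) v = {}"
    using assms by (auto simp: FF_def first_hit_walks_def)
  then show ?thesis by (simp add: hpe_FF)
qed

lemma hpe_Suc_nTr:
  assumes Ein: "\<forall>u v. E u v \<longrightarrow> u \<in> VV" and fin: "finite VV" and v: "v \<notin> Tr"
  shows "hit_prob_exact E VV Tr lab (Suc k) v i
     = 1 / real (card (nbrs E VV v)) * (\<Sum>u\<in>nbrs E VV v. hit_prob_exact E VV Tr lab k u i)"
proof -
  have finN: "finite (nbrs E VV v)" using fin by (simp add: nbrs_def)
  have inj: "inj_on (\<lambda>ws. v # ws) A" for A :: "'a list set" by (auto simp: inj_on_def)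
  have disj: "\<forall>u1\<in>nbrs E VV v. \<forall>u2\<in>nbrs E VV v. u1 \<noteq> u2 \<longrightarrow>
      FF E VV Tr lab i k u1 \<inter> FF E VV Tr lab i k u2 = {}"
    by (auto simp: FF_def first_hit_walks_def)
  have "hit_prob_exact E VV Tr lab (Suc k) v i
      = (\<Sum>ws\<in>(\<Union>u\<in>nbrs E VV v. FF E VV Tr lab i k u). walk_prob E VV (v # ws))"
    unfolding hpe_FF FF_Suc[OF Ein v] by (simp add: sum.reindex[OF inj])
  also have "\<dots> = (\<Sum>u\<in>nbrs E VV v. \<Sum>ws\<in>FF E VV Tr lab i k u. walk_prob E VV (v # ws))"
    by (rule sum.UNION_disjoint[OF finN]) (use FF_finite[OF fin] disj in auto)
  also have "\<dots> = (\<Sum>u\<in>nbrs E VV v. \<Sum>ws\<in>FF E VV Tr lab i k u. 1 / real (card (nbrs E VV v)) * walk_prob E VV ws)"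
  proof (intro sum.cong refl)
    fix u ws assume "ws \<in> FF E VV Tr lab i k u"
    then have "ws \<noteq> []" by (auto simp: FF_def first_hit_walks_def)
    then show "walk_prob E VV (v # ws) = 1 / real (card (nbrs E VV v)) * walk_prob E VV ws"
      by (rule walk_prob_Cons)
  qed
  also have "\<dots> = 1 / real (card (nbrs E VV v)) * (\<Sum>u\<in>nbrs E VV v. hit_prob_exact E VV Tr lab k u i)"
    by (simp add: hpe_FF sum_distrib_left)
  finally show ?thesis .
qed

lemma hpe_nonneg: "hit_prob_exact E VV Tr lab k v i \<ge> 0"
  unfolding hit_prob_exact_def walk_prob_def by (intro sum_nonneg prod_nonneg) auto

lemma p_hit_nonneg: "p_hit E VV Tr lab l v i \<ge> 0"
  unfolding p_hit_def by (intro sum_nonneg hpe_nonneg)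

lemma p_hit_Suc:
  assumes Ein: "\<forall>u v. E u v \<longrightarrow> u \<in> VV" and fin: "finite VV" and Tr: "Tr \<subseteq> VV"
  shows "p_hit E VV Tr lab (Suc l) v i = (if v \<in> Tr then p_hit E VV Tr lab l v i else
     1 / real (card (nbrs E VV v)) * (\<Sum>u\<in>nbrs E VV v. p_hit E VV Tr lab l u i))"
proof (cases "v \<in> Tr")
  case True
  have "p_hit E VV Tr lab n v i = hit_prob_exact E VV Tr lab 0 v i" for n
    unfolding p_hit_def sum.atMost_shift using hpe_Suc_Tr[OF True] by (cases n) (simp_all add: sum.atMost_Suc_shift)
  then show ?thesis using True by simp
next
  case False
  have "p_hit E VV Tr lab (Suc l) v i = hit_prob_exact E VV Tr lab 0 v i + (\<Sum>k\<le>l. hit_prob_exact E VV Tr lab (Suc k) v i)"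
    unfolding p_hit_def by (rule sum.atMost_Suc_shift)
  also have "\<dots> = (\<Sum>k\<le>l. 1 / real (card (nbrs E VV v)) * (\<Sum>u\<in>nbrs E VV v. hit_prob_exact E VV Tr lab k u i))"
    using False hpe_0[OF Tr] hpe_Suc_nTr[OF Ein fin False] by simp
  also have "\<dots> = 1 / real (card (nbrs E VV v)) * (\<Sum>u\<in>nbrs E VV v. p_hit E VV Tr lab l u i)"
    unfolding p_hit_def by (simp add: sum_distrib_left sum.swap[of _ "{..l}"])
  finally show ?thesis using False by simp
qed

lemma p_hit_le1:
  assumes Ein: "\<forall>u v. E u v \<longrightarrow> u \<in> VV" and fin: "finite VV" and Tr: "Tr \<subseteq> VV"
  shows "p_hit E VV Tr lab l v i \<le> 1"
proof (induction l arbitrary: v)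
  case 0
  then show ?case using hpe_0[OF Tr] by (simp add: p_hit_def)
next
  case (Suc l)
  have "(\<Sum>u\<in>nbrs E VV v. p_hit E VV Tr lab l u i) \<le> (\<Sum>u\<in>nbrs E VV v. 1)"
    by (intro sum_mono Suc.IH)
  also have "\<dots> = real (card (nbrs E VV v))" by simp
  finally have "1 / real (card (nbrs E VV v)) * (\<Sum>u\<in>nbrs E VV v. p_hit E VV Tr lab l u i) \<le> 1"
    by (cases "card (nbrs E VV v) = 0") (auto simp: field_simps)
  then show ?case using Suc.IH by (simp add: p_hit_Suc[OF Ein fin Tr])
qed

lemma sum_delta_fun:
  assumes "\<forall>c<n. M c = (if c = a then 1 else 0)" "a < (n::nat)"
  shows "(\<Sum>c<n. M c * (f c :: real)) = f a"
proof -
  have "(\<Sum>c<n. M c * f c) = (\<Sum>c<n. if c = a then f c else 0)"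
    using assms(1) by (intro sum.cong) auto
  also have "\<dots> = f a" using assms(2) by (subst sum.delta) auto
  finally show ?thesis .
qed

theorem proposition2:
  fixes E :: "'a \<Rightarrow> 'a \<Rightarrow> bool" and VV Tr :: "'a set"
    and lab :: "'a \<Rightarrow> nat" and K d :: nat and x :: "'a \<Rightarrow> nat \<Rightarrow> real"
    and D :: "nat \<Rightarrow> nat"
    and S T Vm W :: "nat \<Rightarrow> nat \<Rightarrow> nat \<Rightarrow> real"
    and U :: "nat \<Rightarrow> nat \<Rightarrow> nat \<Rightarrow> real"
  assumes graph: "simple_graph E VV"
    and conn: "connected_graph E VV"
    and two: "card VV \<ge> 2"
    and train: "Tr \<subseteq> VV" "Tr \<noteq> {}"
    and labels: "\<forall>v\<in>Tr. lab v \<in> {1..K}"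
    and D0: "D 0 = d + 1 + K"
    and Dl: "\<forall>l. D l \<ge> 1 + K"
    and S_cond: "\<forall>l\<ge>1. last_rows_zero_left (1 + K) (D l) (D (l - 1)) (S l)
                     \<and> last_rows_identity_right (1 + K) (D l) (D (l - 1)) (S l)"
    and V_cond: "\<forall>l\<ge>1. last_rows_zero (1 + K) (D l) (D (l - 1)) (Vm l)"
    and T_cond: "\<forall>l\<ge>1. last_rows_zero (1 + K) (D l) (D (l - 1)) (T l)"
    and W_cond: "\<forall>l\<ge>1. last_rows_zero_left (1 + K) (D l) (D (l - 1)) (W l)
                     \<and> last_rows_identity_right (1 + K) (D l) (D (l - 1)) (W l)"
    and U_cond: "\<forall>L. \<forall>r<K. (\<forall>c<D L - K. U L r c = 0)
                     \<and> (\<forall>c. D L - K \<le> c \<and> c < D L \<longrightarrow> U L r c = (if c - (D L - K) = r then 1 else 0))"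
  shows "(\<forall>L. \<forall>v\<in>VV.
            (\<forall>i\<in>{1..K}. tfgnn_h E VV Tr lab d x D S T Vm W L v (D L - (K - i + 1))
                          = p_hit E VV Tr lab L v i)
          \<and> argmax_set K (softmax K (\<lambda>i. \<Sum>c<D L. U L (i - 1) c * tfgnn_h E VV Tr lab d x D S T Vm W L v c))
            = argmax_set K (p_hit E VV Tr lab L v))
       \<and> (\<forall>v\<in>VV - Tr. \<forall>i\<in>{1..K}. (\<lambda>L. p_hit E VV Tr lab L v i) \<longlonglongrightarrow> y_LP E VV Tr lab v i)"
proof -
  have Ein: "\<forall>u v. E u v \<longrightarrow> u \<in> VV" and fin: "finite VV"
    using graph by (auto simp: simple_graph_def)
  note Tr = train(1)
  let ?h = "tfgnn_h E VV Tr lab d x D S T Vm W"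
  let ?p = "p_hit E VV Tr lab"
  have main: "\<forall>v. \<forall>i\<in>{1..K}. ?h L v (D L - (K - i + 1)) = ?p L v i" for L
  proof (induction L)
    case 0
    show ?case
    proof (intro allI ballI)
      fix v i assume i: "i \<in> {1..K}"
      have e: "D 0 - (K - i + 1) = d + i" using i D0 by auto
      show "?h 0 v (D 0 - (K - i + 1)) = ?p 0 v i"
        unfolding e using i hpe_0[OF Tr, of E lab v i]
        by (auto simp: p_hit_def tf_input_def)
    qed
  next
    case (Suc l)
    show ?case
    proof (intro allI ballI)
      fix v i assume i: "i \<in> {1..K}"
      define j where "j = D (Suc l) - (K - i + 1)"
      have DSl: "D (Suc l) \<ge> 1 + K" "D l \<ge> 1 + K" using Dl by auto
      have jr: "D (Suc l) - (1 + K) \<le> j" "j < D (Suc l)" "j - (D (Suc l) - (1 + K)) = i"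
        using DSl i by (auto simp: j_def)
      define a where "a = D l - (K - i + 1)"
      have a: "a < D l" "\<forall>c<D l. c - (D l - (1 + K)) = i \<longleftrightarrow> c = a" "D l - (1 + K) \<le> a"
        using DSl i by (auto simp: a_def)
      have Sc: "last_rows_zero_left (1 + K) (D (Suc l)) (D l) (S (Suc l))
                     \<and> last_rows_identity_right (1 + K) (D (Suc l)) (D l) (S (Suc l))"
        using S_cond by (metis diff_Suc_1 le_add1 plus_1_eq_Suc)
      have Wc: "last_rows_zero_left (1 + K) (D (Suc l)) (D l) (W (Suc l))
                     \<and> last_rows_identity_right (1 + K) (D (Suc l)) (D l) (W (Suc l))"
        using W_cond by (metis diff_Suc_1 le_add1 plus_1_eq_Suc)
      have Vc: "last_rows_zero (1 + K) (D (Suc l)) (D l) (Vm (Suc l))"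
        using V_cond by (metis diff_Suc_1 le_add1 plus_1_eq_Suc)
      have Tc: "last_rows_zero (1 + K) (D (Suc l)) (D l) (T (Suc l))"
        using T_cond by (metis diff_Suc_1 le_add1 plus_1_eq_Suc)
      have Sd: "\<forall>c<D l. S (Suc l) j c = (if c = a then 1 else 0)"
      proof (intro allI impI)
        fix c assume c: "c < D l"
        show "S (Suc l) j c = (if c = a then 1 else 0)"
        proof (cases "c < D l - (1 + K)")
          case True
          then show ?thesis using Sc jr a by (auto simp: last_rows_zero_left_def)
        next
          case False
          then show ?thesis using Sc jr a c unfolding last_rows_identity_right_def
            by (metis not_le)
        qed
      qed
      have Wd: "\<forall>c<D l. W (Suc l) j c = (if c = a then 1 else 0)"
      proof (intro allI impI)
        fix c assume c: "c < D l"
        show "W (Suc l) j c = (if c = a then 1 else 0)"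
        proof (cases "c < D l - (1 + K)")
          case True
          then show ?thesis using Wc jr a by (auto simp: last_rows_zero_left_def)
        next
          case False
          then show ?thesis using Wc jr a c unfolding last_rows_identity_right_def
            by (metis not_le)
        qed
      qed
      have IH: "?h l u a = ?p l u i" for u using Suc.IH i by (simp add: a_def)
      have s1: "(\<Sum>c<D l. S (Suc l) j c * ?h l v c) = ?p l v i"
        using sum_delta_fun[OF Sd a(1)] IH by simp
      have s2: "(\<Sum>c<D l. W (Suc l) j c * ?h l u c) = ?p l u i" for u
        using sum_delta_fun[OF Wd a(1)] IH by simp
      have s3: "(\<Sum>c<D l. Vm (Suc l) j c * ?h l u c) = 0" for u
        using Vc jr by (auto simp: last_rows_zero_def)
      have s4: "(\<Sum>c<D l. T (Suc l) j c * ?h l v c) = 0"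
        using Tc jr by (auto simp: last_rows_zero_def)
      have nn: "0 \<le> 1 / real (card (nbrs E VV v)) * (\<Sum>u\<in>nbrs E VV v. ?p l u i)"
        by (intro mult_nonneg_nonneg sum_nonneg p_hit_nonneg) auto
      show "?h (Suc l) v (D (Suc l) - (K - i + 1)) = ?p (Suc l) v i"
        unfolding j_def[symmetric]
        using s1 s2 s3 s4 nn p_hit_nonneg[of E VV Tr lab l v i]
        by (simp add: p_hit_Suc[OF Ein fin Tr] relu_def)
    qed
  qed
  have part1: "argmax_set K (softmax K (\<lambda>i. \<Sum>c<D L. U L (i - 1) c * ?h L v c))
            = argmax_set K (?p L v)" for L v
  proof -
    let ?z = "\<lambda>i. \<Sum>c<D L. U L (i - 1) c * ?h L v c"
    have z: "?z i = ?p L v i" if i: "i \<in> {1..K}" for i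
    proof -
      have DL: "D L \<ge> 1 + K" using Dl by auto
      have "\<forall>c<D L. U L (i - 1) c = (if c = D L - (K - i + 1) then 1 else 0)"
      proof (intro allI impI)
        fix c assume c: "c < D L"
        have r: "i - 1 < K" using i by auto
        show "U L (i - 1) c = (if c = D L - (K - i + 1) then 1 else 0)"
        proof (cases "c < D L - K")
          case True
          then show ?thesis using U_cond r DL i by auto
        next
          case False
          then have "U L (i - 1) c = (if c - (D L - K) = i - 1 then 1 else 0)"
            using U_cond r c by auto
          then show ?thesis using False DL i by auto
        qed
      qed
      moreover have "D L - (K - i + 1) < D L" using DL i by auto
      ultimately show ?thesis using sum_delta_fun main i by auto
    qed
    have pos: "(\<Sum>j\<in>{1..K}. exp (?z j)) > 0" if "K \<ge> 1"
      using that by (intro sum_pos) auto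
    have "(softmax K ?z j \<le> softmax K ?z i) \<longleftrightarrow> (?p L v j \<le> ?p L v i)"
      if "i \<in> {1..K}" "j \<in> {1..K}" for i j
    proof -
      have K: "K \<ge> 1" using that by auto
      have "(softmax K ?z j \<le> softmax K ?z i) \<longleftrightarrow> exp (?z j) \<le> exp (?z i)"
        unfolding softmax_def using pos[OF K] by (simp add: divide_right_mono_neg divide_le_cancel)
      also have "\<dots> \<longleftrightarrow> ?z j \<le> ?z i" by simp
      finally show ?thesis using z that by simp
    qed
    then show ?thesis unfolding argmax_set_def by blast
  qed
  have part2: "(\<lambda>L. ?p L v i) \<longlonglongrightarrow> y_LP E VV Tr lab v i" for v i
  proof -
    have "summable (\<lambda>k. hit_prob_exact E VV Tr lab k v i)"
    proof (rule summableI_nonneg_bounded)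
      show "0 \<le> hit_prob_exact E VV Tr lab n v i" for n by (rule hpe_nonneg)
      fix n
      show "(\<Sum>k<n. hit_prob_exact E VV Tr lab k v i) \<le> 1"
      proof (cases n)
        case 0 then show ?thesis by simp
      next
        case (Suc m)
        have "{..<n} = {..m}" using Suc by auto
        then show ?thesis using p_hit_le1[OF Ein fin Tr, of lab m v i] by (simp add: p_hit_def)
      qed
    qed
    then show ?thesis unfolding p_hit_def y_LP_def by (rule summable_LIMSEQ')
  qed
  show ?thesis using main part1 part2 by blast
qed

end
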